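(* Let $x\in\mathbb{R}^n$ and $\widehat{L}=L-P_{T_z}LP_{T_x^\perp}$. Then $\widehat{L}$ has full column rank, $\widehat{L}^\top\widehat{L}$ is diagonal and invertible, and $L^\top\widehat{L}=\widehat{L}^\top\widehat{L}$.
   Context: Let $n,N\in\mathbb{N}$, let $G_1,\dots,G_N\subseteq\{1,\dots,n\}$ be nonempty groups, possibly overlapping, with $\bigcup_iG_i=\{1,\dots,n\}$, and weights $w_i>0$. $x_G$ is the subvector of $x$ indexed by $G$ (increasing order). Let $p=\sum_i|G_i|$, partition $\{1,\dots,p\}$ into consecutive blocks $J_i=\{\sum_{j<i}|G_j|+1,\dots,\sum_{j\le i}|G_j|\}$, and define $L\in\mathbb{R}^{p\times n}$ by $(Lx)_{J_i}=w_ix_{G_i}$. For $x\in\mathbb{R}^n$: $\mathcal{I}_x=\{t:x_{G_t}\ne0\}$; $\mathcal{E}_x=\{1,\dots,n\}\setminus\bigcup_{t\notin\mathcal{I}_x}G_t$, $T_x=\{x'\in\mathbb{R}^n:\mathrm{supp}(x')\subseteq\mathcal{E}_x\}$; $\mathcal{E}_z=\bigcup_{t\in\mathcal{I}_x}J_t$, $T_z=\{z'\in\mathbb{R}^p:\mathrm{supp}(z')\subseteq\mathcal{E}_z\}$. $P_T$ is the orthogonal (coordinate) projection onto $T$ and $T^\perp$ its orthogonal complement. *)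

theory Defs
  imports "Jordan_Normal_Form.DL_Rank" "Jordan_Normal_Form.Matrix"
begin

text \<open>Groups are indexed by t < N (0-based); coordinates of x are 0..<n (0-based).\<close>

definition grp_off :: "(nat \<Rightarrow> nat set) \<Rightarrow> nat \<Rightarrow> nat" where
  "grp_off G t = (\<Sum>j<t. card (G j))"

definition grp_J :: "(nat \<Rightarrow> nat set) \<Rightarrow> nat \<Rightarrow> nat set" where
  "grp_J G t = {grp_off G t ..< grp_off G (Suc t)}"

text \<open>L: (L x)_{J_t} = w_t x_{G_t}, the subvector taken in increasing order.\<close>
definition Lmat :: "nat \<Rightarrow> nat \<Rightarrow> (nat \<Rightarrow> nat set) \<Rightarrow> (nat \<Rightarrow> real) \<Rightarrow> real mat" where
  "Lmat n N G w = mat (grp_off G N) n (\<lambda>(r, c).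
     \<Sum>t<N. if r \<in> grp_J G t \<and> c = sorted_list_of_set (G t) ! (r - grp_off G t) then w t else 0)"

definition act_grps :: "nat \<Rightarrow> (nat \<Rightarrow> nat set) \<Rightarrow> real vec \<Rightarrow> nat set" where
  "act_grps N G x = {t. t < N \<and> (\<exists>i\<in>G t. x $ i \<noteq> 0)}"

definition E_x :: "nat \<Rightarrow> nat \<Rightarrow> (nat \<Rightarrow> nat set) \<Rightarrow> real vec \<Rightarrow> nat set" where
  "E_x n N G x = {0..<n} - (\<Union>t\<in>{t. t < N \<and> t \<notin> act_grps N G x}. G t)"

definition E_z :: "nat \<Rightarrow> (nat \<Rightarrow> nat set) \<Rightarrow> real vec \<Rightarrow> nat set" where
  "E_z N G x = (\<Union>t\<in>act_grps N G x. grp_J G t)"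

definition coord_proj :: "nat \<Rightarrow> nat set \<Rightarrow> real mat" where
  "coord_proj m E = mat m m (\<lambda>(i, j). if i = j \<and> i \<in> E then 1 else 0)"

definition P_Tx :: "nat \<Rightarrow> nat \<Rightarrow> (nat \<Rightarrow> nat set) \<Rightarrow> real vec \<Rightarrow> real mat" where
  "P_Tx n N G x = coord_proj n (E_x n N G x)"

definition P_Tx_perp :: "nat \<Rightarrow> nat \<Rightarrow> (nat \<Rightarrow> nat set) \<Rightarrow> real vec \<Rightarrow> real mat" where
  "P_Tx_perp n N G x = 1\<^sub>m n - P_Tx n N G x"

definition P_Tz :: "nat \<Rightarrow> (nat \<Rightarrow> nat set) \<Rightarrow> real vec \<Rightarrow> real mat" where
  "P_Tz N G x = coord_proj (grp_off G N) (E_z N G x)"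

definition Lhat :: "nat \<Rightarrow> nat \<Rightarrow> (nat \<Rightarrow> nat set) \<Rightarrow> (nat \<Rightarrow> real) \<Rightarrow> real vec \<Rightarrow> real mat" where
  "Lhat n N G w x = Lmat n N G w - P_Tz N G x * Lmat n N G w * P_Tx_perp n N G x"

definition full_col_rank :: "real mat \<Rightarrow> bool" where
  "full_col_rank A = (vec_space.rank (dim_row A) A = dim_col A)"

end

theory Submission
  imports Defs
begin

lemma diag_left_mult:
  fixes D M :: "real mat"
  assumes D: "D \<in> carrier_mat n n" and M: "M \<in> carrier_mat n k"
    and dg: "diagonal_mat D" and i: "i < n" and j: "j < k"
  shows "(D * M) $$ (i, j) = D $$ (i, i) * M $$ (i, j)"
proof -
  have "(D * M) $$ (i, j) = (\<Sum>l\<in>{0..<n}. D $$ (i, l) * M $$ (l, j))"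
    using D M i j by (simp add: index_mult_mat scalar_prod_def)
  also have "\<dots> = (\<Sum>l\<in>{i}. D $$ (i, l) * M $$ (l, j))"
    apply (rule sum.mono_neutral_right)
    using dg D i unfolding diagonal_mat_def by auto
  finally show ?thesis by simp
qed

lemma abstract_part:
  fixes A B :: "real mat"
  assumes A: "A \<in> carrier_mat p n" and B: "B \<in> carrier_mat p n"
    and H1: "\<And>r c c'. r < p \<Longrightarrow> c < n \<Longrightarrow> c' < n \<Longrightarrow> c \<noteq> c' \<Longrightarrow> A $$ (r, c) = 0 \<or> A $$ (r, c') = 0"
    and H2: "\<And>r c. r < p \<Longrightarrow> c < n \<Longrightarrow> B $$ (r, c) = A $$ (r, c) \<or> B $$ (r, c) = 0"
    and H3: "\<And>c. c < n \<Longrightarrow> \<exists>r<p. B $$ (r, c) \<noteq> 0"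
  shows "full_col_rank B \<and> diagonal_mat (B\<^sup>T * B) \<and> invertible_mat (B\<^sup>T * B) \<and> A\<^sup>T * B = B\<^sup>T * B"
proof -
  have pw: "A $$ (r, c) * B $$ (r, c') = B $$ (r, c) * B $$ (r, c')"
    if r: "r < p" and c: "c < n" and c': "c' < n" for r c c'
  proof (cases "c = c'")
    case True
    then show ?thesis using H2[OF r c] by auto
  next
    case False
    show ?thesis
    proof (cases "B $$ (r, c') = 0")
      case True then show ?thesis by simp
    next
      case nz: False
      then have "B $$ (r, c') = A $$ (r, c')" using H2[OF r c'] by auto
      then have "A $$ (r, c) = 0" using H1[OF r c c' False] nz by auto
      then have "B $$ (r, c) = 0" using H2[OF r c] by auto
      then show ?thesis using \<open>A $$ (r, c) = 0\<close> by simp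
    qed
  qed
  define D where "D = B\<^sup>T * B"
  have Dc: "D \<in> carrier_mat n n" using B unfolding D_def by auto
  have Dij: "D $$ (i, j) = (\<Sum>r\<in>{0..<p}. B $$ (r, i) * B $$ (r, j))" if "i < n" "j < n" for i j
    using B that unfolding D_def by (simp add: index_mult_mat scalar_prod_def)
  have ATB: "A\<^sup>T * B = D"
  proof (rule eq_matI)
    fix i j assume ij: "i < dim_row D" "j < dim_col D"
    then have ij': "i < n" "j < n" using Dc by auto
    have "(A\<^sup>T * B) $$ (i, j) = (\<Sum>r\<in>{0..<p}. A $$ (r, i) * B $$ (r, j))"
      using A B ij' by (simp add: index_mult_mat scalar_prod_def)
    also have "\<dots> = D $$ (i, j)" unfolding Dij[OF ij']
      by (rule sum.cong) (use pw ij' in auto)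
    finally show "(A\<^sup>T * B) $$ (i, j) = D $$ (i, j)" .
  qed (use A B Dc in auto)
  have offd: "D $$ (i, j) = 0" if "i < n" "j < n" "i \<noteq> j" for i j
  proof -
    have "D $$ (i, j) = (\<Sum>r\<in>{0..<p}. 0)"
      unfolding Dij[OF that(1,2)]
    proof (rule sum.cong)
      fix r assume r: "r \<in> {0..<p}"
      show "B $$ (r, i) * B $$ (r, j) = 0"
      proof (cases "B $$ (r, j) = 0")
        case False
        then have "B $$ (r, j) = A $$ (r, j)" using H2[of r j] r that by auto
        then have "A $$ (r, i) = 0" using H1[of r i j] r that False by auto
        then have "B $$ (r, i) = 0" using H2[of r i] r that by auto
        then show ?thesis by simp
      qed simp
    qed simp
    then show ?thesis by simp
  qed
  have dpos: "D $$ (i, i) > 0" if ilt: "i < n" for i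
  proof -
    obtain r where r: "r < p" "B $$ (r, i) \<noteq> 0" using H3[OF ilt] by auto
    have sq: "0 < B $$ (r, i) * B $$ (r, i)" using r(2) by (auto simp add: zero_less_mult_iff linorder_neq_iff)
    have "0 < (\<Sum>r\<in>{0..<p}. B $$ (r, i) * B $$ (r, i))"
      by (rule sum_pos2[of _ r]) (use r sq in auto)
    then show ?thesis using Dij[OF ilt ilt] by simp
  qed
  have dg: "diagonal_mat D" unfolding diagonal_mat_def using offd Dc by auto
  have inv: "invertible_mat D"
  proof -
    define E where "E = mat n n (\<lambda>(i, j). if i = j then 1 / D $$ (i, i) else (0::real))"
    have Ec: "E \<in> carrier_mat n n" unfolding E_def by auto
    have dgE: "diagonal_mat E" unfolding diagonal_mat_def E_def by auto
    have "D * E = 1\<^sub>m n"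
    proof (rule eq_matI)
      fix i j assume "i < dim_row (1\<^sub>m n :: real mat)" "j < dim_col (1\<^sub>m n :: real mat)"
      then have ij: "i < n" "j < n" by auto
      show "(D * E) $$ (i, j) = 1\<^sub>m n $$ (i, j)"
        unfolding diag_left_mult[OF Dc Ec dg ij] using ij dpos[OF ij(1)] by (auto simp: E_def)
    qed (use Dc Ec in auto)
    moreover have "E * D = 1\<^sub>m n"
    proof (rule eq_matI)
      fix i j assume "i < dim_row (1\<^sub>m n :: real mat)" "j < dim_col (1\<^sub>m n :: real mat)"
      then have ij: "i < n" "j < n" by auto
      show "(E * D) $$ (i, j) = 1\<^sub>m n $$ (i, j)"
        unfolding diag_left_mult[OF Ec Dc dgE ij] using ij dpos[OF ij(1)] offd[OF ij] by (auto simp: E_def)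
    qed (use Dc Ec in auto)
    ultimately show ?thesis unfolding invertible_mat_def inverts_mat_def using Dc Ec by auto
  qed
  have rk: "full_col_rank B"
  proof -
    interpret vec_space "TYPE(real)" p .
    have dist: "distinct (cols B)"
      unfolding cols_def distinct_map
    proof (intro conjI inj_onI)
      fix i j assume i: "i \<in> set [0..<dim_col B]" and j: "j \<in> set [0..<dim_col B]"
        and eq: "col B i = col B j"
      show "i = j"
      proof (rule ccontr)
        assume ne: "i \<noteq> j"
        have ij: "i < n" "j < n" using i j B by auto
        have "D $$ (i, j) = (\<Sum>r\<in>{0..<p}. B $$ (r, i) * B $$ (r, i))"
          unfolding Dij[OF ij]
        proof (rule sum.cong)
          fix r assume "r \<in> {0..<p}"
          then have "col B i $ r = col B j $ r" using eq by simp
          then have "B $$ (r, j) = B $$ (r, i)" using \<open>r \<in> {0..<p}\<close> ij B by auto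
          then show "B $$ (r, i) * B $$ (r, j) = B $$ (r, i) * B $$ (r, i)" by simp
        qed simp
        then have "D $$ (i, j) = D $$ (i, i)" using Dij[OF ij(1) ij(1)] by simp
        then show False using offd[OF ij ne] dpos[OF ij(1)] by simp
      qed
    qed simp
    have li: "lin_indpt (set (cols B))"
    proof
      assume "lin_dep (set (cols B))"
      then obtain v where v: "v \<in> carrier_vec n" "v \<noteq> 0\<^sub>v n" "B *\<^sub>v v = 0\<^sub>v p"
        using lin_depE[OF B _ dist] by blast
      have "D *\<^sub>v v = B\<^sup>T *\<^sub>v (B *\<^sub>v v)"
        unfolding D_def using B v by (metis assoc_mult_mat_vec carrier_matD(1) carrier_matD(2) carrier_mat_triv index_transpose_mat(2) index_transpose_mat(3))
      also have "\<dots> = 0\<^sub>v n" using v B by auto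
      finally have Dv: "D *\<^sub>v v = 0\<^sub>v n" .
      have "v = 0\<^sub>v n"
      proof (rule eq_vecI)
        fix i assume "i < dim_vec (0\<^sub>v n :: real vec)"
        then have i: "i < n" by simp
        have "(D *\<^sub>v v) $ i = (\<Sum>l\<in>{0..<n}. D $$ (i, l) * v $ l)"
          using Dc v i by (simp add: scalar_prod_def)
        also have "\<dots> = (\<Sum>l\<in>{i}. D $$ (i, l) * v $ l)"
          by (rule sum.mono_neutral_right) (use offd i in auto)
        finally have "D $$ (i, i) * v $ i = 0" using Dv i by simp
        then show "v $ i = 0\<^sub>v n $ i" using dpos[OF i] i by simp
      qed (use v in auto)
      then show False using v by simp
    qed
    have "rank B = n" by (rule lin_indpt_full_rank[OF B dist li])
    then show ?thesis unfolding full_col_rank_def using B by simp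
  qed
  show ?thesis using rk dg inv ATB unfolding D_def by simp
qed


lemma off_Suc: "grp_off G (Suc t) = grp_off G t + card (G t)"
  unfolding grp_off_def by simp

lemma off_mono: "a \<le> b \<Longrightarrow> grp_off G a \<le> grp_off G b"
  unfolding grp_off_def by (rule sum_mono2) auto

lemma block_exists: "r < grp_off G N \<Longrightarrow> \<exists>t<N. r \<in> grp_J G t"
proof (induction N)
  case 0 then show ?case by (simp add: grp_off_def)
next
  case (Suc N)
  show ?case
  proof (cases "r < grp_off G N")
    case True then show ?thesis using Suc.IH by (meson less_SucI)
  next
    case False then show ?thesis using Suc.prems unfolding grp_J_def by auto
  qed
qed

lemma block_unique:
  assumes "r \<in> grp_J G t" "r \<in> grp_J G t'" shows "t = t'"
proof (rule ccontr)
  assume "t \<noteq> t'"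
  then consider "Suc t \<le> t'" | "Suc t' \<le> t" by linarith
  then show False
  proof cases
    case 1 then show False using off_mono[OF 1, of G] assms unfolding grp_J_def by auto
  next
    case 2 then show False using off_mono[OF 2, of G] assms unfolding grp_J_def by auto
  qed
qed

lemma L_entry:
  assumes t: "t < N" and r: "r \<in> grp_J G t" and c: "c < n"
  shows "Lmat n N G w $$ (r, c) = (if c = sorted_list_of_set (G t) ! (r - grp_off G t) then w t else 0)"
proof -
  have "r < grp_off G (Suc t)" using r unfolding grp_J_def by auto
  also have "\<dots> \<le> grp_off G N" using off_mono[of "Suc t" N G] t by simp
  finally have rp: "r < grp_off G N" .
  have "Lmat n N G w $$ (r, c) = (\<Sum>t'<N. if r \<in> grp_J G t' \<and> c = sorted_list_of_set (G t') ! (r - grp_off G t') then w t' else 0)"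
    unfolding Lmat_def using rp c by simp
  also have "\<dots> = (\<Sum>t'\<in>{t}. if r \<in> grp_J G t' \<and> c = sorted_list_of_set (G t') ! (r - grp_off G t') then w t' else 0)"
    by (rule sum.mono_neutral_right) (use t block_unique[OF r] in auto)
  finally show ?thesis using r by simp
qed

lemma col_in:
  assumes "finite (G t)" "r \<in> grp_J G t"
  shows "sorted_list_of_set (G t) ! (r - grp_off G t) \<in> G t"
proof -
  have "r - grp_off G t < length (sorted_list_of_set (G t))"
    using assms unfolding grp_J_def off_Suc by auto
  then show ?thesis using assms(1) nth_mem by (metis set_sorted_list_of_set)
qed

lemma col_surj:
  assumes "finite (G t)" "c \<in> G t"
  shows "\<exists>r \<in> grp_J G t. sorted_list_of_set (G t) ! (r - grp_off G t) = c"
proof -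
  have "c \<in> set (sorted_list_of_set (G t))" using assms by simp
  then obtain k where k: "k < length (sorted_list_of_set (G t))" "sorted_list_of_set (G t) ! k = c"
    by (meson in_set_conv_nth)
  show ?thesis
    by (rule bexI[of _ "grp_off G t + k"]) (use k in \<open>auto simp: grp_J_def off_Suc\<close>)
qed

lemma proj_left:
  fixes A :: "real mat"
  assumes A: "A \<in> carrier_mat m k" and i: "i < m" and j: "j < k"
  shows "(coord_proj m E * A) $$ (i, j) = (if i \<in> E then A $$ (i, j) else 0)"
proof -
  have "(coord_proj m E * A) $$ (i, j) = (\<Sum>l\<in>{0..<m}. (if i = l \<and> i \<in> E then 1 else 0) * A $$ (l, j))"
    using A i j by (simp add: index_mult_mat scalar_prod_def coord_proj_def)
  also have "\<dots> = (\<Sum>l\<in>{i}. (if i = l \<and> i \<in> E then 1 else 0) * A $$ (l, j))"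
    by (rule sum.mono_neutral_right) (use i in auto)
  finally show ?thesis by simp
qed

lemma proj_right:
  fixes A :: "real mat"
  assumes A: "A \<in> carrier_mat m k" and i: "i < m" and j: "j < k"
  shows "(A * coord_proj k E) $$ (i, j) = (if j \<in> E then A $$ (i, j) else 0)"
proof -
  have "(A * coord_proj k E) $$ (i, j) = (\<Sum>l\<in>{0..<k}. A $$ (i, l) * (if l = j \<and> l \<in> E then 1 else 0))"
    using A i j by (simp add: index_mult_mat scalar_prod_def coord_proj_def)
  also have "\<dots> = (\<Sum>l\<in>{j}. A $$ (i, l) * (if l = j \<and> l \<in> E then 1 else 0))"
    by (rule sum.mono_neutral_right) (use j in auto)
  finally show ?thesis by simp
qed

lemma perp_eq: "P_Tx_perp n N G x = coord_proj n ({0..<n} - E_x n N G x)"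
  unfolding P_Tx_perp_def P_Tx_def coord_proj_def
  by (rule eq_matI) auto

lemma Lhat_entry:
  assumes r: "r < grp_off G N" and c: "c < n"
  shows "Lhat n N G w x $$ (r, c) =
    Lmat n N G w $$ (r, c) - (if r \<in> E_z N G x \<and> c \<notin> E_x n N G x then Lmat n N G w $$ (r, c) else 0)"
proof -
  have Lc: "Lmat n N G w \<in> carrier_mat (grp_off G N) n" unfolding Lmat_def by simp
  have PL: "P_Tz N G x * Lmat n N G w \<in> carrier_mat (grp_off G N) n"
    by (rule mult_carrier_mat[OF _ Lc]) (simp add: P_Tz_def coord_proj_def)
  have M: "(P_Tz N G x * Lmat n N G w * P_Tx_perp n N G x) $$ (r, c)
     = (if r \<in> E_z N G x \<and> c \<notin> E_x n N G x then Lmat n N G w $$ (r, c) else 0)"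
    unfolding perp_eq proj_right[OF PL r c] unfolding P_Tz_def proj_left[OF Lc r c] using c by auto
  have Mc: "P_Tz N G x * Lmat n N G w * P_Tx_perp n N G x \<in> carrier_mat (grp_off G N) n"
    by (rule mult_carrier_mat[OF PL]) (simp add: perp_eq coord_proj_def)
  have "Lhat n N G w x $$ (r, c) = Lmat n N G w $$ (r, c) - (P_Tz N G x * Lmat n N G w * P_Tx_perp n N G x) $$ (r, c)"
    unfolding Lhat_def using Mc r c by (subst index_minus_mat) auto
  then show ?thesis unfolding M .
qed

theorem lemmaA4:
  fixes n N :: nat and G :: "nat \<Rightarrow> nat set" and w :: "nat \<Rightarrow> real" and x :: "real vec"
  assumes "\<And>t. t < N \<Longrightarrow> G t \<noteq> {}"
      and "\<And>t. t < N \<Longrightarrow> G t \<subseteq> {0..<n}"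
      and "(\<Union>t<N. G t) = {0..<n}"
      and "\<And>t. t < N \<Longrightarrow> w t > 0"
      and "x \<in> carrier_vec n"
  shows "full_col_rank (Lhat n N G w x)
       \<and> diagonal_mat ((Lhat n N G w x)\<^sup>T * Lhat n N G w x)
       \<and> invertible_mat ((Lhat n N G w x)\<^sup>T * Lhat n N G w x)
       \<and> (Lmat n N G w)\<^sup>T * Lhat n N G w x = (Lhat n N G w x)\<^sup>T * Lhat n N G w x"
proof (rule abstract_part)
  have Lc: "Lmat n N G w \<in> carrier_mat (grp_off G N) n" unfolding Lmat_def by simp
  then show "Lmat n N G w \<in> carrier_mat (grp_off G N) n" .
  show "Lhat n N G w x \<in> carrier_mat (grp_off G N) n"
    unfolding Lhat_def
    by (rule minus_carrier_mat, rule mult_carrier_mat[OF mult_carrier_mat[OF _ Lc]]) (simp_all add: P_Tz_def perp_eq coord_proj_def)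
  have fin: "finite (G t)" if "t < N" for t using assms(2)[OF that] finite_subset by blast
  show "Lmat n N G w $$ (r, c) = 0 \<or> Lmat n N G w $$ (r, c') = 0"
    if h: "r < grp_off G N" "c < n" "c' < n" "c \<noteq> c'" for r c c'
  proof -
    obtain t where t: "t < N" "r \<in> grp_J G t" using block_exists[OF h(1)] by auto
    show ?thesis using L_entry[OF t h(2)] L_entry[OF t h(3)] h(4) by auto
  qed
  show "Lhat n N G w x $$ (r, c) = Lmat n N G w $$ (r, c) \<or> Lhat n N G w x $$ (r, c) = 0"
    if "r < grp_off G N" "c < n" for r c
    using Lhat_entry[OF that] by auto
  show "\<exists>r<grp_off G N. Lhat n N G w x $$ (r, c) \<noteq> 0" if c: "c < n" for c
  proof -
    have good: "\<exists>r<grp_off G N. Lhat n N G w x $$ (r, c) \<noteq> 0"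
      if t: "t < N" "c \<in> G t" and ok: "\<And>r. r \<in> grp_J G t \<Longrightarrow> \<not> (r \<in> E_z N G x \<and> c \<notin> E_x n N G x)" for t
    proof -
      obtain r where r: "r \<in> grp_J G t" "sorted_list_of_set (G t) ! (r - grp_off G t) = c"
        using col_surj[of G t c, OF fin[OF t(1)] t(2)] by auto
      have "r < grp_off G (Suc t)" using r unfolding grp_J_def by auto
      also have "\<dots> \<le> grp_off G N" using off_mono[of "Suc t" N G] t by simp
      finally have rp: "r < grp_off G N" .
      have "Lhat n N G w x $$ (r, c) = w t"
        using Lhat_entry[OF rp c] L_entry[OF t(1) r(1) c] r(2) ok[OF r(1)] by auto
      then show ?thesis using rp assms(4)[OF t(1)] by auto
    qed
    show ?thesis
    proof (cases "c \<in> E_x n N G x")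
      case True
      obtain t where t: "t < N" "c \<in> G t" using c assms(3) by (metis UN_iff atLeastLessThan_iff lessThan_iff zero_le)
      show ?thesis by (rule good[OF t]) (use True in auto)
    next
      case False
      then obtain t where t: "t < N" "t \<notin> act_grps N G x" "c \<in> G t"
        using c unfolding E_x_def by auto
      show ?thesis
      proof (rule good[OF t(1,3)])
        fix r assume r: "r \<in> grp_J G t"
        show "\<not> (r \<in> E_z N G x \<and> c \<notin> E_x n N G x)"
        proof
          assume "r \<in> E_z N G x \<and> c \<notin> E_x n N G x"
          then obtain t' where "t' \<in> act_grps N G x" "r \<in> grp_J G t'" unfolding E_z_def by auto
          then show False using block_unique[OF r] t(2) by auto
        qed
      qed
    qed
  qed
qed

end
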